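(* Let $K$ be an algebraically closed field of characteristic zero, $\deg_1$ the standard homogeneous degree on $K[x_1,\dots,x_n]$, $\Phi=(f_1,\dots,f_n)$ a polynomial automorphism of $K^n$, $d_i=\deg_1(f_i)$, and $\nabla=d_1+\dots+d_n-n$. Then for every $P\in K[x_1,\dots,x_n]$, $\deg_1(P\circ\Phi)\ge\deg_1(\frac{\partial P}{\partial x_n}\circ\Phi)+d_n-\nabla$, and more generally $\deg_1(P\circ\Phi)\ge\deg_1(\frac{\partial^kP}{\partial x_n^k}\circ\Phi)+kd_n-k\nabla$ for all $k\ge 0$. *)

theory Defs
  imports "HOL-Library.Poly_Mapping" "HOL-Computational_Algebra.Polynomial"
begin

text \<open>Multivariate polynomials over K: finitely supported maps from monomials
(exponent vectors, variable x_(i+1) has index i) to coefficients.\<close>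

type_synonym 'a mpoly = "(nat \<Rightarrow>\<^sub>0 nat) \<Rightarrow>\<^sub>0 'a"

definition mvar :: "nat \<Rightarrow> 'a::comm_ring_1 mpoly" where
  "mvar i = Poly_Mapping.single (Poly_Mapping.single i 1) 1"

definition in_vars :: "nat \<Rightarrow> 'a::zero mpoly \<Rightarrow> bool" where
  "in_vars n p \<longleftrightarrow> (\<forall>m \<in> Poly_Mapping.keys p. Poly_Mapping.keys m \<subseteq> {..<n})"

definition mon_deg :: "(nat \<Rightarrow>\<^sub>0 nat) \<Rightarrow> nat" where
  "mon_deg m = (\<Sum>i\<in>Poly_Mapping.keys m. Poly_Mapping.lookup m i)"

definition tdeg :: "'a::zero mpoly \<Rightarrow> nat" where
  "tdeg p = Max (insert 0 (mon_deg ` Poly_Mapping.keys p))"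

definition msubst :: "(nat \<Rightarrow> 'a::comm_ring_1 mpoly) \<Rightarrow> 'a mpoly \<Rightarrow> 'a mpoly" where
  "msubst \<Phi> p = (\<Sum>m\<in>Poly_Mapping.keys p.
      Poly_Mapping.single 0 (Poly_Mapping.lookup p m) *
      (\<Prod>i\<in>Poly_Mapping.keys m. (\<Phi> i) ^ (Poly_Mapping.lookup m i)))"

definition mpderiv :: "nat \<Rightarrow> 'a::comm_ring_1 mpoly \<Rightarrow> 'a mpoly" where
  "mpderiv j p = (\<Sum>m\<in>Poly_Mapping.keys p.
      Poly_Mapping.single (m - Poly_Mapping.single j 1)
        (of_nat (Poly_Mapping.lookup m j) * Poly_Mapping.lookup p m))"

definition poly_automorphism :: "nat \<Rightarrow> (nat \<Rightarrow> 'a::comm_ring_1 mpoly) \<Rightarrow> bool" where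
  "poly_automorphism n \<Phi> \<longleftrightarrow>
     (\<forall>i<n. in_vars n (\<Phi> i)) \<and>
     (\<exists>\<Psi>. (\<forall>i<n. in_vars n (\<Psi> i)) \<and>
          (\<forall>i<n. msubst \<Psi> (\<Phi> i) = mvar i) \<and>
          (\<forall>i<n. msubst \<Phi> (\<Psi> i) = mvar i))"

end

theory Submission
  imports Defs "Jordan_Normal_Form.Determinant"
begin

abbreviation lk where "lk \<equiv> Poly_Mapping.lookup"
abbreviation ks where "ks \<equiv> Poly_Mapping.keys"
abbreviation sg where "sg \<equiv> Poly_Mapping.single"

lemma pm_sum_monomials: "(\<Sum>m\<in>ks p. sg m (lk p m)) = p"
  by (rule poly_mapping_eqI) (simp add: lookup_sum lookup_single when_def in_keys_iff)

lemma pm_sum_monomials_superset: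
  assumes "finite S" "ks p \<subseteq> S" shows "(\<Sum>m\<in>S. sg m (lk p m)) = p"
proof -
  have "(\<Sum>m\<in>S. sg m (lk p m)) = (\<Sum>m\<in>ks p. sg m (lk p m))"
    by (rule sum.mono_neutral_right[OF assms(1,2)]) (auto simp: in_keys_iff)
  then show ?thesis by (simp add: pm_sum_monomials)
qed

definition mevp :: "(nat \<Rightarrow> 'a::comm_ring_1 mpoly) \<Rightarrow> (nat \<Rightarrow>\<^sub>0 nat) \<Rightarrow> 'a mpoly" where
  "mevp \<Phi> m = (\<Prod>i\<in>ks m. \<Phi> i ^ lk m i)"

lemma mevp_superset: assumes "finite S" "ks m \<subseteq> S"
  shows "mevp \<Phi> m = (\<Prod>i\<in>S. \<Phi> i ^ lk m i)"
  unfolding mevp_def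
  by (rule prod.mono_neutral_left[OF assms(1,2)]) (auto simp: in_keys_iff)

lemma mevp_add: "mevp \<Phi> (a + b) = mevp \<Phi> a * mevp \<Phi> b"
proof -
  let ?S = "ks a \<union> ks b"
  have "mevp \<Phi> (a+b) = (\<Prod>i\<in>?S. \<Phi> i ^ lk (a+b) i)"
    by (rule mevp_superset) (use keys_add[of a b] in auto)
  also have "\<dots> = (\<Prod>i\<in>?S. \<Phi> i ^ lk a i) * (\<Prod>i\<in>?S. \<Phi> i ^ lk b i)"
    by (simp add: lookup_add power_add prod.distrib)
  also have "\<dots> = mevp \<Phi> a * mevp \<Phi> b"
    by (simp add: mevp_superset[symmetric])
  finally show ?thesis .
qed

lemma mevp_zero [simp]: "mevp \<Phi> 0 = 1" by (simp add: mevp_def)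

lemma mevp_single [simp]: "mevp \<Phi> (sg i 1) = \<Phi> i" unfolding mevp_def by simp

lemma msubst_alt: "msubst \<Phi> p = (\<Sum>m\<in>ks p. sg 0 (lk p m) * mevp \<Phi> m)"
  by (simp add: msubst_def mevp_def)

lemma msubst_superset: assumes "finite S" "ks p \<subseteq> S"
  shows "msubst \<Phi> p = (\<Sum>m\<in>S. sg 0 (lk p m) * mevp \<Phi> m)"
  unfolding msubst_alt
  by (rule sum.mono_neutral_left[OF assms(1,2)]) (auto simp: in_keys_iff)

lemma msubst_add: "msubst \<Phi> (p + q) = msubst \<Phi> p + msubst \<Phi> q"
proof -
  let ?S = "ks p \<union> ks q"
  have "msubst \<Phi> (p+q) = (\<Sum>m\<in>?S. sg 0 (lk (p+q) m) * mevp \<Phi> m)"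
    by (rule msubst_superset) (use keys_add[of p q] in auto)
  also have "\<dots> = (\<Sum>m\<in>?S. sg 0 (lk p m) * mevp \<Phi> m) + (\<Sum>m\<in>?S. sg 0 (lk q m) * mevp \<Phi> m)"
    by (simp add: lookup_add single_add distrib_right sum.distrib)
  also have "\<dots> = msubst \<Phi> p + msubst \<Phi> q"
    by (simp add: msubst_superset[symmetric])
  finally show ?thesis .
qed

lemma msubst_zero [simp]: "msubst \<Phi> 0 = 0" by (simp add: msubst_def)

lemma msubst_single: "msubst \<Phi> (sg m c) = sg 0 c * mevp \<Phi> m"
  by (simp add: msubst_alt)

lemma msubst_sum: "msubst \<Phi> (\<Sum>i\<in>I. f i) = (\<Sum>i\<in>I. msubst \<Phi> (f i))"
  by (induction I rule: infinite_finite_induct) (auto simp: msubst_add)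

lemma sg0_mult: "sg 0 (a * b) = sg 0 a * (sg 0 b :: ('b::comm_monoid_add \<Rightarrow>\<^sub>0 'a::comm_ring_1))"
  by (simp add: mult_single)

lemma msubst_mult: "msubst \<Phi> (p * q) = msubst \<Phi> p * msubst \<Phi> q"
proof -
  have "p * q = (\<Sum>a\<in>ks p. sg a (lk p a)) * (\<Sum>b\<in>ks q. sg b (lk q b))"
    by (simp add: pm_sum_monomials)
  also have "\<dots> = (\<Sum>a\<in>ks p. \<Sum>b\<in>ks q. sg (a+b) (lk p a * lk q b))"
    by (simp add: sum_product mult_single)
  finally have "msubst \<Phi> (p*q) = (\<Sum>a\<in>ks p. \<Sum>b\<in>ks q. sg 0 (lk p a * lk q b) * mevp \<Phi> (a+b))"
    by (simp add: msubst_sum msubst_single)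
  also have "\<dots> = (\<Sum>a\<in>ks p. \<Sum>b\<in>ks q. (sg 0 (lk p a) * mevp \<Phi> a) * (sg 0 (lk q b) * mevp \<Phi> b))"
    by (intro sum.cong refl) (simp add: mevp_add sg0_mult ac_simps)
  also have "\<dots> = msubst \<Phi> p * msubst \<Phi> q"
    by (simp add: msubst_alt sum_product)
  finally show ?thesis .
qed

lemma msubst_const [simp]: "msubst \<Phi> (sg 0 c) = sg 0 c"
  by (simp add: msubst_single)

lemma msubst_one [simp]: "msubst \<Phi> 1 = 1"
  using msubst_const[of \<Phi> 1] by simp

lemma msubst_mvar [simp]: "msubst \<Phi> (mvar i) = \<Phi> i"
  by (simp add: mvar_def msubst_single mevp_def)

lemma msubst_prod: "msubst \<Phi> (\<Prod>i\<in>I. f i) = (\<Prod>i\<in>I. msubst \<Phi> (f i))"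
  by (induction I rule: infinite_finite_induct) (auto simp: msubst_mult)

lemma msubst_power: "msubst \<Phi> (p ^ k) = msubst \<Phi> p ^ k"
  by (induction k) (auto simp: msubst_mult)

lemma msubst_uminus: "msubst \<Phi> (- p) = - msubst \<Phi> p"
  using msubst_add[of \<Phi> p "-p"] by (simp add: eq_neg_iff_add_eq_0 add.commute)

lemma msubst_diff: "msubst \<Phi> (p - q) = msubst \<Phi> p - msubst \<Phi> q"
  using msubst_add[of \<Phi> p "-q"] by (simp add: msubst_uminus)

lemma mvar_power: "mvar i ^ k = sg (sg i k) (1::'a::comm_ring_1)"
  by (induction k) (auto simp: mvar_def mult_single single_add[symmetric])

lemma prod_sg_one: "(\<Prod>i\<in>I. sg (f i) (1::'a::comm_ring_1)) = sg (\<Sum>i\<in>I. f i) 1"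
  by (induction I rule: infinite_finite_induct) (auto simp: mult_single)

lemma mevp_mvar: "mevp mvar m = (sg m 1 :: 'a::comm_ring_1 mpoly)"
proof -
  have "mevp mvar m = (\<Prod>i\<in>ks m. sg (sg i (lk m i)) (1::'a))"
    by (simp add: mevp_def mvar_power)
  also have "\<dots> = sg (\<Sum>i\<in>ks m. sg i (lk m i)) 1"
    by (rule prod_sg_one)
  finally show ?thesis by (simp add: pm_sum_monomials)
qed


lemma mpoly_induct:
  assumes vars: "\<forall>m\<in>ks p. ks m \<subseteq> V"
  and const: "\<And>c. Pr (sg 0 c)"
  and var: "\<And>i. i \<in> V \<Longrightarrow> Pr (mvar i)"
  and add: "\<And>p q. Pr p \<Longrightarrow> Pr q \<Longrightarrow> Pr (p + q)"
  and mult: "\<And>p q. Pr p \<Longrightarrow> Pr q \<Longrightarrow> Pr (p * q)"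
  shows "Pr (p :: 'a::comm_ring_1 mpoly)"
proof -
  have sum: "Pr (sum f I)" if "\<forall>i\<in>I. Pr (f i)" for f :: "_ \<Rightarrow> 'a mpoly" and I
    using that
  proof (induction I rule: infinite_finite_induct)
    case (infinite A) then show ?case using const[of 0] by simp
  next
    case empty then show ?case using const[of 0] by simp
  next
    case (insert x F) then show ?case by (simp add: add)
  qed
  have prod: "Pr (prod f I)" if "\<forall>i\<in>I. Pr (f i)" for f :: "_ \<Rightarrow> 'a mpoly" and I
    using that
  proof (induction I rule: infinite_finite_induct)
    case (infinite A) then show ?case using const[of 1] by simp
  next
    case empty then show ?case using const[of 1] by simp
  next
    case (insert x F) then show ?case by (simp add: mult)
  qed
  have pow: "Pr (q ^ k)" if "Pr q" for q k
    using that const[of 1] by (induction k) (auto intro: mult)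
  have mono: "Pr (sg m c)" if "m \<in> ks p" for m c
  proof -
    have "sg m c = sg 0 c * mevp mvar m"
      by (simp add: mevp_mvar mult_single)
    moreover have "Pr (mevp mvar m)"
      unfolding mevp_def using vars that by (auto intro!: prod pow var)
    ultimately show ?thesis using const mult by metis
  qed
  show ?thesis
    using sum[of "ks p" "\<lambda>m. sg m (lk p m)"] mono by (simp add: pm_sum_monomials)
qed

lemma msubst_cong:
  assumes "\<And>m i. m \<in> ks p \<Longrightarrow> i \<in> ks m \<Longrightarrow> \<Phi> i = \<Phi>' i"
  shows "msubst \<Phi> p = msubst \<Phi>' p"
  unfolding msubst_def using assms by (intro sum.cong refl arg_cong2[where f="(*)"] prod.cong) auto

lemma msubst_mvar_id: "msubst mvar p = (p :: 'a::comm_ring_1 mpoly)"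
  by (simp add: msubst_alt mevp_mvar mult_single pm_sum_monomials)

lemma msubst_id:
  assumes "in_vars n p" "\<And>i. i < n \<Longrightarrow> \<Phi> i = mvar i"
  shows "msubst \<Phi> p = (p :: 'a::comm_ring_1 mpoly)"
proof -
  have "msubst \<Phi> p = msubst mvar p"
    by (rule msubst_cong) (use assms in \<open>auto simp: in_vars_def\<close>)
  then show ?thesis by (simp add: msubst_mvar_id)
qed

lemma msubst_comp: "msubst \<Psi> (msubst \<Phi> p) = msubst (\<lambda>i. msubst \<Psi> (\<Phi> i)) (p :: 'a::comm_ring_1 mpoly)"
  by (rule mpoly_induct[where V=UNIV and p=p]) (auto simp: msubst_add msubst_mult)

lemma mpderiv_superset: assumes "finite S" "ks p \<subseteq> S"
  shows "mpderiv j p = (\<Sum>m\<in>S. sg (m - sg j 1) (of_nat (lk m j) * lk p m))"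
  unfolding mpderiv_def
  by (rule sum.mono_neutral_left[OF assms(1,2)]) (auto simp: in_keys_iff)

lemma mpderiv_add: "mpderiv j (p + q) = mpderiv j p + mpderiv j q"
proof -
  let ?S = "ks p \<union> ks q"
  have "mpderiv j (p+q) = (\<Sum>m\<in>?S. sg (m - sg j 1) (of_nat (lk m j) * lk (p+q) m))"
    by (rule mpderiv_superset) (use keys_add[of p q] in auto)
  also have "\<dots> = mpderiv j p + mpderiv j q"
    using mpderiv_superset[of ?S p j] mpderiv_superset[of ?S q j]
    by (simp add: lookup_add single_add distrib_left sum.distrib)
  finally show ?thesis .
qed

lemma mpderiv_zero [simp]: "mpderiv j 0 = 0" by (simp add: mpderiv_def)

lemma mpderiv_single: "mpderiv j (sg m c) = sg (m - sg j 1) (of_nat (lk m j) * c)"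
  by (simp add: mpderiv_def)

lemma mpderiv_sum: "mpderiv j (\<Sum>i\<in>I. f i) = (\<Sum>i\<in>I. mpderiv j (f i))"
  by (induction I rule: infinite_finite_induct) (auto simp: mpderiv_add)

lemma mpderiv_uminus: "mpderiv j (- p) = - mpderiv j p"
  using mpderiv_add[of j p "-p"] by (simp add: eq_neg_iff_add_eq_0 add.commute)

lemma mpderiv_const [simp]: "mpderiv j (sg 0 c) = 0"
  by (simp add: mpderiv_single)

lemma mpderiv_mvar: "mpderiv j (mvar i) = (if i = j then 1 else (0::'a::comm_ring_1 mpoly))"
  by (auto simp: mvar_def mpderiv_single lookup_single)

lemma sg_cong_nz: "(c \<noteq> 0 \<Longrightarrow> a = b) \<Longrightarrow> sg a c = sg b c"
  by (cases "c = 0") auto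

lemma mpderiv_mono_mult:
  "mpderiv j (sg a c * sg b d) = mpderiv j (sg a c) * sg b d + sg a c * mpderiv j (sg b (d::'a::comm_ring_1))"
proof -
  let ?e = "sg j (1::nat)"
  have 1: "sg (a - ?e + b) (of_nat (lk a j) * c * d) = sg (a + b - ?e) (of_nat (lk a j) * c * d)"
    by (rule sg_cong_nz, rule poly_mapping_eqI, cases "lk a j")
       (auto simp: lookup_add lookup_minus lookup_single when_def)
  have 2: "sg (a + (b - ?e)) (c * (of_nat (lk b j) * d)) = sg (a + b - ?e) (c * (of_nat (lk b j) * d))"
    by (rule sg_cong_nz, rule poly_mapping_eqI, cases "lk b j")
       (auto simp: lookup_add lookup_minus lookup_single when_def)
  have L: "mpderiv j (sg a c * sg b d) = sg (a + b - ?e) (of_nat (lk a j) * c * d + c * (of_nat (lk b j) * d))"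
    by (simp add: mult_single mpderiv_single lookup_add algebra_simps)
  have R: "mpderiv j (sg a c) * sg b d + sg a c * mpderiv j (sg b d) = sg (a - ?e + b) (of_nat (lk a j) * c * d) + sg (a + (b - ?e)) (c * (of_nat (lk b j) * d))"
    by (simp add: mpderiv_single mult_single mult.assoc)
  show ?thesis
    by (simp only: L R 1 2 single_add)
qed

lemma mpderiv_mult: "mpderiv j (p * q) = mpderiv j p * q + p * mpderiv j (q :: 'a::comm_ring_1 mpoly)"
proof -
  have "mpderiv j (p * q) = mpderiv j ((\<Sum>a\<in>ks p. sg a (lk p a)) * (\<Sum>b\<in>ks q. sg b (lk q b)))"
    by (simp add: pm_sum_monomials)
  also have "\<dots> = (\<Sum>a\<in>ks p. \<Sum>b\<in>ks q. mpderiv j (sg a (lk p a) * sg b (lk q b)))"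
    by (simp add: sum_product mpderiv_sum)
  also have "\<dots> = (\<Sum>a\<in>ks p. \<Sum>b\<in>ks q. mpderiv j (sg a (lk p a)) * sg b (lk q b))
     + (\<Sum>a\<in>ks p. \<Sum>b\<in>ks q. sg a (lk p a) * mpderiv j (sg b (lk q b)))"
    by (simp add: mpderiv_mono_mult sum.distrib)
  also have "\<dots> = mpderiv j (\<Sum>a\<in>ks p. sg a (lk p a)) * (\<Sum>b\<in>ks q. sg b (lk q b))
     + (\<Sum>a\<in>ks p. sg a (lk p a)) * mpderiv j (\<Sum>b\<in>ks q. sg b (lk q b))"
    by (simp add: sum_product mpderiv_sum)
  finally show ?thesis by (simp add: pm_sum_monomials)
qed


lemma chain_rule:
  assumes "finite I" "\<forall>m\<in>ks p. ks m \<subseteq> I"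
  shows "mpderiv j (msubst \<Phi> p) = (\<Sum>i\<in>I. msubst \<Phi> (mpderiv i p) * mpderiv j (\<Phi> i :: 'a::comm_ring_1 mpoly))"
proof (rule mpoly_induct[where V=I and p=p, OF assms(2)])
  fix c show "mpderiv j (msubst \<Phi> (sg 0 c)) = (\<Sum>i\<in>I. msubst \<Phi> (mpderiv i (sg 0 c)) * mpderiv j (\<Phi> i))"
    by simp
next
  fix i assume i: "i \<in> I"
  have "(\<Sum>l\<in>I. msubst \<Phi> (mpderiv l (mvar i)) * mpderiv j (\<Phi> l)) = (\<Sum>l\<in>I. if l = i then mpderiv j (\<Phi> i) else 0)"
    by (rule sum.cong) (simp_all add: mpderiv_mvar)
  also have "\<dots> = mpderiv j (\<Phi> i)"
    using i assms(1) by simp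
  finally show "mpderiv j (msubst \<Phi> (mvar i)) = (\<Sum>l\<in>I. msubst \<Phi> (mpderiv l (mvar i)) * mpderiv j (\<Phi> l))"
    by simp
next
  fix p q assume "mpderiv j (msubst \<Phi> p) = (\<Sum>i\<in>I. msubst \<Phi> (mpderiv i p) * mpderiv j (\<Phi> i))"
     "mpderiv j (msubst \<Phi> q) = (\<Sum>i\<in>I. msubst \<Phi> (mpderiv i q) * mpderiv j (\<Phi> i))"
  then show "mpderiv j (msubst \<Phi> (p + q)) = (\<Sum>i\<in>I. msubst \<Phi> (mpderiv i (p + q)) * mpderiv j (\<Phi> i))"
    by (simp only: msubst_add mpderiv_add distrib_right sum.distrib)
next
  fix p q assume IH: "mpderiv j (msubst \<Phi> p) = (\<Sum>i\<in>I. msubst \<Phi> (mpderiv i p) * mpderiv j (\<Phi> i))"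
     "mpderiv j (msubst \<Phi> q) = (\<Sum>i\<in>I. msubst \<Phi> (mpderiv i q) * mpderiv j (\<Phi> i))"
  have "mpderiv j (msubst \<Phi> (p * q)) = mpderiv j (msubst \<Phi> p) * msubst \<Phi> q + msubst \<Phi> p * mpderiv j (msubst \<Phi> q)"
    by (simp only: msubst_mult mpderiv_mult)
  also have "\<dots> = (\<Sum>i\<in>I. msubst \<Phi> (mpderiv i p) * mpderiv j (\<Phi> i) * msubst \<Phi> q) + (\<Sum>i\<in>I. msubst \<Phi> p * (msubst \<Phi> (mpderiv i q) * mpderiv j (\<Phi> i)))"
    unfolding IH sum_distrib_right sum_distrib_left ..
  also have "\<dots> = (\<Sum>i\<in>I. (msubst \<Phi> (mpderiv i p) * msubst \<Phi> q + msubst \<Phi> p * msubst \<Phi> (mpderiv i q)) * mpderiv j (\<Phi> i))"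
    unfolding sum.distrib[symmetric]
    by (intro sum.cong refl) (simp add: algebra_simps)
  also have "\<dots> = (\<Sum>i\<in>I. msubst \<Phi> (mpderiv i (p * q)) * mpderiv j (\<Phi> i))"
    by (simp only: mpderiv_mult msubst_add msubst_mult)
  finally show "mpderiv j (msubst \<Phi> (p * q)) = (\<Sum>i\<in>I. msubst \<Phi> (mpderiv i (p * q)) * mpderiv j (\<Phi> i))" .
qed

lemma keys_mpderiv: "m' \<in> ks (mpderiv j p) \<Longrightarrow> \<exists>m\<in>ks p. m' = m - sg j 1 \<and> lk m j \<noteq> 0"
proof -
  assume a: "m' \<in> ks (mpderiv j p)"
  have "m' \<in> (\<Union>m\<in>ks p. ks (sg (m - sg j 1) (of_nat (lk m j) * lk p m)))"
  proof -
    have "ks (mpderiv j p) \<subseteq> (\<Union>m\<in>ks p. ks (sg (m - sg j 1) (of_nat (lk m j) * lk p m)))"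
      unfolding mpderiv_def by (rule keys_sum)
    then show ?thesis using a by (rule subsetD)
  qed
  then obtain m where m: "m \<in> ks p" "m' \<in> ks (sg (m - sg j 1) (of_nat (lk m j) * lk p m))"
    by blast
  then have "m' = m - sg j 1" "of_nat (lk m j) * lk p m \<noteq> 0"
    by (simp_all split: if_splits)
  moreover have "lk m j \<noteq> 0" using calculation(2) by (metis mult_zero_left of_nat_0)
  ultimately show ?thesis using m(1) by blast
qed

lemma in_vars_mpderiv: "in_vars n p \<Longrightarrow> in_vars n (mpderiv j p)"
  unfolding in_vars_def
proof (intro ballI subsetI)
  fix m' i assume vars: "\<forall>m\<in>ks p. ks m \<subseteq> {..<n}" and m': "m' \<in> ks (mpderiv j p)" and i: "i \<in> ks m'"
  obtain m where m: "m \<in> ks p" "m' = m - sg j 1" using keys_mpderiv[OF m'] by blast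
  have "lk m i \<noteq> 0" using i m(2) by (auto simp: in_keys_iff lookup_minus)
  then have "i \<in> ks m" by (simp add: in_keys_iff)
  then show "i \<in> {..<n}" using vars m(1) by blast
qed

lemma tdeg_le_iff: "tdeg p \<le> d \<longleftrightarrow> (\<forall>m\<in>ks p. mon_deg m \<le> d)"
  unfolding tdeg_def by (subst Max_le_iff) auto

lemma mon_deg_le_tdeg: "m \<in> ks p \<Longrightarrow> mon_deg m \<le> tdeg p"
  using tdeg_le_iff[of p "tdeg p"] by auto

lemma mon_deg_superset: "finite S \<Longrightarrow> ks m \<subseteq> S \<Longrightarrow> mon_deg m = (\<Sum>i\<in>S. lk m i)"
  unfolding mon_deg_def by (rule sum.mono_neutral_left) (auto simp: in_keys_iff)

lemma mon_deg_add: "mon_deg (a + b) = mon_deg a + mon_deg b"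
proof -
  let ?S = "ks a \<union> ks b"
  have "mon_deg (a+b) = (\<Sum>i\<in>?S. lk (a+b) i)"
    by (rule mon_deg_superset) (use keys_add[of a b] in auto)
  also have "\<dots> = mon_deg a + mon_deg b"
    using mon_deg_superset[of ?S a] mon_deg_superset[of ?S b]
    by (simp add: lookup_add sum.distrib)
  finally show ?thesis .
qed

lemma mon_deg_zero [simp]: "mon_deg 0 = 0" by (simp add: mon_deg_def)

lemma lk_le_mon_deg: "lk m j \<le> mon_deg m"
proof (cases "j \<in> ks m")
  case True then show ?thesis unfolding mon_deg_def by (intro member_le_sum) auto
qed (auto simp: in_keys_iff)

lemma tdeg_add_le: "tdeg (p + q) \<le> max (tdeg p) (tdeg q)"
  unfolding tdeg_le_iff using keys_add[of p q] mon_deg_le_tdeg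
  by (metis (no_types, lifting) Un_iff max.coboundedI1 max.coboundedI2 subsetD)

lemma tdeg_sum_le: "(\<And>i. i \<in> I \<Longrightarrow> tdeg (f i) \<le> d) \<Longrightarrow> tdeg (sum f I) \<le> d"
  unfolding tdeg_le_iff using keys_sum[of f I] by blast

lemma tdeg_mult_le: "tdeg (p * q) \<le> tdeg p + tdeg q"
  unfolding tdeg_le_iff
proof
  fix m assume "m \<in> ks (p * q)"
  then obtain a b where "m = a + b" "a \<in> ks p" "b \<in> ks q"
    using keys_mult[of p q] by blast
  then show "mon_deg m \<le> tdeg p + tdeg q"
    by (simp add: mon_deg_add add_mono mon_deg_le_tdeg)
qed

lemma tdeg_const [simp]: "tdeg (sg 0 c) = 0"
  by (simp add: tdeg_def)

lemma tdeg_one [simp]: "tdeg (1::'a::comm_ring_1 mpoly) = 0"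
  by (simp add: tdeg_def)

lemma tdeg_zero [simp]: "tdeg (0::'a::zero mpoly) = 0"
  by (simp add: tdeg_def)

lemma tdeg_prod_le: "tdeg (prod f I) \<le> (\<Sum>i\<in>I. tdeg (f i :: 'a::comm_ring_1 mpoly))"
proof (induction I rule: infinite_finite_induct)
  case (insert x F)
  then show ?case using tdeg_mult_le[of "f x" "prod f F"] by simp
qed auto

lemma tdeg_uminus [simp]: "tdeg (- p) = tdeg (p :: 'a::ab_group_add mpoly)"
  by (simp add: tdeg_def)

lemma tdeg_const_mult_le: "tdeg (sg 0 c * p) \<le> tdeg (p::'a::comm_ring_1 mpoly)"
  using tdeg_mult_le[of "sg 0 c" p] by simp

lemma tdeg_const_mult_eq:
  assumes "c \<noteq> 0" shows "tdeg (sg 0 c * p) = tdeg (p::'a::idom mpoly)"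
proof -
  have "ks (sg 0 c * p) = ks p"
    unfolding mult_map_scale_conv_mult[symmetric] using assms
    by (auto simp: in_keys_iff map.rep_eq when_def)
  then show ?thesis by (simp add: tdeg_def)
qed

lemma tdeg_mpderiv: "tdeg (mpderiv j p) \<le> tdeg p - 1"
  unfolding tdeg_le_iff
proof
  fix m' assume "m' \<in> ks (mpderiv j p)"
  then obtain m where m: "m \<in> ks p" "m' = m - sg j 1" "lk m j \<noteq> 0"
    using keys_mpderiv by blast
  have "m = m' + sg j 1"
    using m(2,3) by (intro poly_mapping_eqI) (auto simp: lookup_add lookup_minus lookup_single when_def)
  moreover have "mon_deg (sg j (1::nat)) = 1" by (simp add: mon_deg_def)
  ultimately have "mon_deg m = mon_deg m' + 1"
    using mon_deg_add[of m' "sg j 1"] by simp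
  with mon_deg_le_tdeg[OF m(1)] show "mon_deg m' \<le> tdeg p - 1" by simp
qed

lemma mpderiv_tdeg0: assumes "tdeg p = 0" shows "mpderiv j p = 0"
proof -
  have "lk m j = 0" if "m \<in> ks p" for m
    using lk_le_mon_deg[of m j] mon_deg_le_tdeg[OF that] assms by simp
  then show ?thesis unfolding mpderiv_def by simp
qed


lemma zero_le_monomial: "(0::nat \<Rightarrow>\<^sub>0 nat) \<le> k"
proof transfer
  fix k :: "nat \<Rightarrow> nat"
  show "less_fun (\<lambda>k. 0) k \<or> (\<lambda>k. 0) = k"
  proof (cases "k = (\<lambda>k. 0)")
    case False
    then obtain i where "k i \<noteq> 0" by auto
    define i0 where "i0 = (LEAST i. k i \<noteq> 0)"
    have "k i0 \<noteq> 0" unfolding i0_def by (rule LeastI) fact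
    moreover have "\<forall>j<i0. k j = 0" unfolding i0_def using not_less_Least by blast
    ultimately have "less_fun (\<lambda>k. 0) k"
      unfolding less_fun_def by (intro exI[of _ i0]) auto
    then show ?thesis by blast
  qed simp
qed

lemma unit_const:
  fixes p q :: "'a::idom mpoly"
  assumes pq: "p * q = 1"
  shows "\<exists>c. p = sg 0 c"
proof -
  have "p \<noteq> 0" "q \<noteq> 0" using pq by auto
  then have ne: "ks p \<noteq> {}" "ks q \<noteq> {}" by auto
  define a where "a = Max (ks p)"
  define b where "b = Max (ks q)"
  have a: "a \<in> ks p" "\<And>x. x \<in> ks p \<Longrightarrow> x \<le> a" unfolding a_def using ne by auto
  have b: "b \<in> ks q" "\<And>y. y \<in> ks q \<Longrightarrow> y \<le> b" unfolding b_def using ne by auto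
  have "p * q = (\<Sum>x\<in>ks p. sg x (lk p x)) * (\<Sum>y\<in>ks q. sg y (lk q y))"
    by (simp add: pm_sum_monomials)
  also have "\<dots> = (\<Sum>x\<in>ks p. \<Sum>y\<in>ks q. sg (x+y) (lk p x * lk q y))"
    by (simp add: sum_product mult_single)
  finally have "lk (p * q) (a + b) = (\<Sum>x\<in>ks p. \<Sum>y\<in>ks q. lk (sg (x+y) (lk p x * lk q y)) (a+b))"
    by (simp add: lookup_sum)
  also have "\<dots> = (\<Sum>x\<in>ks p. \<Sum>y\<in>ks q. if x = a \<and> y = b then lk p x * lk q y else 0)"
  proof (intro sum.cong refl)
    fix x y assume xy: "x \<in> ks p" "y \<in> ks q"
    have "x + y = a + b \<longleftrightarrow> x = a \<and> y = b"
    proof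
      assume e: "x + y = a + b"
      show "x = a \<and> y = b"
      proof (rule ccontr)
        assume "\<not> (x = a \<and> y = b)"
        then have "x < a \<or> y < b" using a(2)[OF xy(1)] b(2)[OF xy(2)] by auto
        then have "x + y < a + b"
          using a(2)[OF xy(1)] b(2)[OF xy(2)] add_less_le_mono add_le_less_mono by blast
        then show False using e by simp
      qed
    qed auto
    then show "lk (sg (x+y) (lk p x * lk q y)) (a+b) = (if x = a \<and> y = b then lk p x * lk q y else 0)"
      by (auto simp: lookup_single when_def)
  qed
  also have "\<dots> = (\<Sum>x\<in>ks p. if x = a then lk p a * lk q b else 0)"
  proof (intro sum.cong refl)
    fix x
    show "(\<Sum>y\<in>ks q. if x = a \<and> y = b then lk p x * lk q y else 0) = (if x = a then lk p a * lk q b else 0)"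
    proof (cases "x = a")
      case True then show ?thesis using b(1) by simp
    qed simp
  qed
  also have "\<dots> = lk p a * lk q b"
    using a(1) by simp
  finally have "lk (p*q) (a+b) \<noteq> 0" using a(1) b(1) by (simp add: in_keys_iff)
  then have "a + b = 0" using pq by (simp add: lookup_one when_def split: if_splits)
  then have a0: "a = 0"
  proof (intro poly_mapping_eqI)
    fix i assume "a + b = 0"
    then have "lk (a + b) i = 0" by simp
    then show "lk a i = lk 0 i" by (simp add: lookup_add)
  qed
  have "ks p \<subseteq> {0}"
    using a(2) zero_le_monomial a0 by (metis antisym insertCI subsetI)
  then have "p = (\<Sum>m\<in>{0}. sg m (lk p m))"
    by (intro pm_sum_monomials_superset[symmetric]) auto
  then show ?thesis by auto
qed


lemma tdeg_of_int_mult: "tdeg (of_int k * X) \<le> tdeg (X::'a::comm_ring_1 mpoly)"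
  using tdeg_const_mult_le[of "of_int k" X] by (simp add: single_of_int)

lemma tdeg_det_le:
  fixes M :: "'a::comm_ring_1 mpoly mat"
  assumes M: "M \<in> carrier_mat m m"
    and r: "\<And>i j. i < m \<Longrightarrow> j < m \<Longrightarrow> tdeg (M $$ (i,j)) \<le> r i"
  shows "tdeg (det M) \<le> (\<Sum>i\<in>{0..<m}. r i)"
  unfolding det_def'[OF M]
proof (rule tdeg_sum_le)
  fix p assume "p \<in> {p. p permutes {0..<m}}"
  then have p: "\<And>i. i < m \<Longrightarrow> p i < m" using permutes_in_image by fastforce
  have "tdeg (signof p * (\<Prod>i = 0..<m. M $$ (i, p i))) \<le> tdeg (\<Prod>i = 0..<m. M $$ (i, p i))"
    by (rule tdeg_of_int_mult)
  also have "\<dots> \<le> (\<Sum>i = 0..<m. tdeg (M $$ (i, p i)))" by (rule tdeg_prod_le)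
  also have "\<dots> \<le> (\<Sum>i = 0..<m. r i)" by (intro sum_mono r p) auto
  finally show "tdeg (signof p * (\<Prod>i = 0..<m. M $$ (i, p i))) \<le> (\<Sum>i = 0..<m. r i)" .
qed

lemma tdeg_neg_one_pow_mult: "tdeg ((-1)^k * X) = tdeg (X::'a::comm_ring_1 mpoly)"
  by (cases "even k") auto

lemma tdeg_cofactor_last:
  fixes J :: "'a::comm_ring_1 mpoly mat"
  assumes J: "J \<in> carrier_mat (Suc N) (Suc N)"
    and r: "\<And>i j. i < N \<Longrightarrow> j < Suc N \<Longrightarrow> tdeg (J $$ (i,j)) \<le> r i"
  shows "tdeg (cofactor J N j) \<le> (\<Sum>i\<in>{0..<N}. r i)"
proof -
  have M: "mat_delete J N j \<in> carrier_mat N N" using mat_delete_carrier[OF J] by simp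
  have "tdeg (det (mat_delete J N j)) \<le> (\<Sum>i\<in>{0..<N}. r i)"
  proof (rule tdeg_det_le[OF M])
    fix i c assume "i < N" "c < N"
    then show "tdeg (mat_delete J N j $$ (i, c)) \<le> r i"
      using J by (auto simp: mat_delete_def intro!: r)
  qed
  then show ?thesis unfolding cofactor_def by (simp add: tdeg_neg_one_pow_mult)
qed


lemma in_vars_keys: "in_vars n p \<Longrightarrow> \<forall>m\<in>ks p. ks m \<subseteq> {0..<n}"
  unfolding in_vars_def atLeast0LessThan by blast

lemma step_lemma:
  fixes \<Phi> \<Psi> :: "nat \<Rightarrow> 'a::field mpoly" and Q :: "'a mpoly"
  assumes n: "n = Suc N"
    and PhiV: "\<forall>i<n. in_vars n (\<Phi> i)" and PsiV: "\<forall>i<n. in_vars n (\<Psi> i)"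
    and PsiPhi: "\<forall>i<n. msubst \<Psi> (\<Phi> i) = mvar i" and PhiPsi: "\<forall>i<n. msubst \<Phi> (\<Psi> i) = mvar i"
    and QV: "in_vars n Q" and nz: "mpderiv N Q \<noteq> 0"
  shows "int (tdeg (msubst \<Phi> Q)) \<ge> int (tdeg (msubst \<Phi> (mpderiv N Q))) + int (tdeg (\<Phi> N))
           - ((\<Sum>i<n. int (tdeg (\<Phi> i))) - int n)"
proof -
  define J where "J = mat n n (\<lambda>(i,j). mpderiv j (\<Phi> i))"
  define A where "A = mat n n (\<lambda>(l,j). msubst \<Phi> (mpderiv j (\<Psi> l)))"
  have Jc: "J \<in> carrier_mat n n" and Ac: "A \<in> carrier_mat n n" by (auto simp: J_def A_def)
  have backPhi: "msubst \<Phi> (msubst \<Psi> X) = X" if "in_vars n X" for X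
    using msubst_id[OF that, of "\<lambda>i. msubst \<Phi> (\<Psi> i)"] PhiPsi by (simp add: msubst_comp)
  have backPsi: "msubst \<Psi> (msubst \<Phi> X) = X" if "in_vars n X" for X
    using msubst_id[OF that, of "\<lambda>i. msubst \<Psi> (\<Phi> i)"] PsiPhi by (simp add: msubst_comp)
  have JA: "(\<Sum>l\<in>{0..<n}. mpderiv l (\<Phi> i) * msubst \<Phi> (mpderiv j (\<Psi> l))) = (if i = j then 1 else 0)"
    if ij: "i < n" "j < n" for i j
  proof -
    have "mpderiv j (msubst \<Psi> (\<Phi> i)) = (\<Sum>l\<in>{0..<n}. msubst \<Psi> (mpderiv l (\<Phi> i)) * mpderiv j (\<Psi> l))"
      using in_vars_keys[of n "\<Phi> i"] PhiV ij by (intro chain_rule) auto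
    then have "msubst \<Phi> (mpderiv j (mvar i)) = msubst \<Phi> (\<Sum>l\<in>{0..<n}. msubst \<Psi> (mpderiv l (\<Phi> i)) * mpderiv j (\<Psi> l))"
      using PsiPhi ij by simp
    also have "\<dots> = (\<Sum>l\<in>{0..<n}. mpderiv l (\<Phi> i) * msubst \<Phi> (mpderiv j (\<Psi> l)))"
      by (simp add: msubst_sum msubst_mult backPhi in_vars_mpderiv PhiV ij)
    finally show ?thesis by (cases "i = j") (simp_all add: mpderiv_mvar)
  qed
  have JA1: "J * A = 1\<^sub>m n"
    by (rule eq_matI) (auto simp: J_def A_def scalar_prod_def JA)
  have "det J * det A = 1"
    using det_mult[OF Jc Ac] JA1 by simp
  then obtain c where c: "det J = sg 0 c" using unit_const by blast
  have c0: "c \<noteq> 0" using \<open>det J * det A = 1\<close> c by auto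
  have adjJ: "adj_mat J = det J \<cdot>\<^sub>m A"
  proof -
    have "adj_mat J = adj_mat J * (J * A)" using JA1 adj_mat(1)[OF Jc] by simp
    also have "\<dots> = (adj_mat J * J) * A" using adj_mat(1)[OF Jc] Jc Ac by simp
    also have "\<dots> = (det J \<cdot>\<^sub>m 1\<^sub>m n) * A" using adj_mat(3)[OF Jc] by simp
    also have "\<dots> = det J \<cdot>\<^sub>m (1\<^sub>m n * A)" using Ac by (intro mult_smult_assoc_mat) auto
    also have "\<dots> = det J \<cdot>\<^sub>m A" using Ac by simp
    finally show ?thesis .
  qed
  have cof: "cofactor J N j = det J * msubst \<Phi> (mpderiv N (\<Psi> j))" if "j < n" for j
  proof -
    have "adj_mat J $$ (j, N) = (det J \<cdot>\<^sub>m A) $$ (j, N)" by (simp add: adjJ)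
    then show ?thesis using that n Jc by (simp add: adj_mat_def A_def)
  qed
  define v where "v i = msubst \<Phi> (mpderiv i Q)" for i
  define g where "g j = mpderiv j (msubst \<Phi> Q)" for j
  have g: "g j = (\<Sum>i\<in>{0..<n}. v i * mpderiv j (\<Phi> i))" for j
    unfolding g_def v_def using in_vars_keys[OF QV] by (intro chain_rule) auto
  have vN: "(\<Sum>j\<in>{0..<n}. g j * msubst \<Phi> (mpderiv N (\<Psi> j))) = v N"
  proof -
    have "(\<Sum>j\<in>{0..<n}. g j * msubst \<Phi> (mpderiv N (\<Psi> j)))
        = (\<Sum>i\<in>{0..<n}. v i * (\<Sum>j\<in>{0..<n}. mpderiv j (\<Phi> i) * msubst \<Phi> (mpderiv N (\<Psi> j))))"
      unfolding g sum_distrib_right sum_distrib_left by (subst sum.swap) (simp add: mult.assoc)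
    also have "\<dots> = (\<Sum>i\<in>{0..<n}. v i * (if i = N then 1 else 0))"
    proof (intro sum.cong refl)
      fix i assume "i \<in> {0..<n}"
      then have "i < n" "N < n" using n by auto
      then show "v i * (\<Sum>j\<in>{0..<n}. mpderiv j (\<Phi> i) * msubst \<Phi> (mpderiv N (\<Psi> j))) = v i * (if i = N then 1 else 0)"
        by (simp only: JA)
    qed
    also have "\<dots> = v N" by (simp add: n)
    finally show ?thesis .
  qed
  have cvN: "det J * v N = (\<Sum>j\<in>{0..<n}. g j * cofactor J N j)"
    unfolding vN[symmetric] by (simp add: sum_distrib_left cof ac_simps)
  define d where "d i = tdeg (\<Phi> i)" for i
  define T where "T = tdeg (msubst \<Phi> Q)"
  have Jdeg: "tdeg (J $$ (i, j)) \<le> d i - 1" if "i < n" "j < n" for i j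
    using that tdeg_mpderiv[of j "\<Phi> i"] by (simp add: J_def d_def)
  have d1: "d i \<ge> 1" if i: "i < n" for i
  proof (rule ccontr)
    assume "\<not> 1 \<le> d i"
    then have "tdeg (\<Phi> i) = 0" by (simp add: d_def)
    then have "mpderiv l (\<Phi> i) = 0" for l by (rule mpderiv_tdeg0)
    then show False using JA[OF i i] by simp
  qed
  have T1: "T \<ge> 1"
  proof (rule ccontr)
    assume "\<not> 1 \<le> T"
    then have "g j = 0" for j by (simp add: T_def g_def mpderiv_tdeg0)
    then have "v N = 0" using vN by simp
    then have "msubst \<Psi> (v N) = 0" by simp
    moreover have "msubst \<Psi> (v N) = mpderiv N Q"
      unfolding v_def by (rule backPsi, rule in_vars_mpderiv, rule QV)
    ultimately show False using nz by simp
  qed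
  have "tdeg (v N) = tdeg (det J * v N)" using c c0 by (simp add: tdeg_const_mult_eq)
  also have "\<dots> \<le> (T - 1) + (\<Sum>i\<in>{0..<N}. d i - 1)"
    unfolding cvN
  proof (rule tdeg_sum_le)
    fix j assume j: "j \<in> {0..<n}"
    have "tdeg (g j * cofactor J N j) \<le> tdeg (g j) + tdeg (cofactor J N j)" by (rule tdeg_mult_le)
    also have "tdeg (g j) \<le> T - 1" unfolding g_def T_def by (rule tdeg_mpderiv)
    also have "tdeg (cofactor J N j) \<le> (\<Sum>i\<in>{0..<N}. d i - 1)"
      by (rule tdeg_cofactor_last) (use Jc n Jdeg in auto)
    finally show "tdeg (g j * cofactor J N j) \<le> (T - 1) + (\<Sum>i\<in>{0..<N}. d i - 1)" by simp
  qed
  finally have main: "tdeg (v N) \<le> (T - 1) + (\<Sum>i\<in>{0..<N}. d i - 1)" .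
  have "int (\<Sum>i\<in>{0..<N}. d i - 1) = (\<Sum>i\<in>{0..<N}. int (d i) - 1)"
    using d1 n by (simp add: of_nat_diff)
  also have "\<dots> = (\<Sum>i<N. int (d i)) - int N" by (simp add: sum_subtractf atLeast0LessThan)
  finally have S: "int (\<Sum>i\<in>{0..<N}. d i - 1) = (\<Sum>i<N. int (d i)) - int N" .
  have S2: "(\<Sum>i<n. int (d i)) = (\<Sum>i<N. int (d i)) + int (d N)" by (simp add: n)
  from main have "int (tdeg (v N)) \<le> int (T - 1) + int (\<Sum>i\<in>{0..<N}. d i - 1)" by linarith
  then show ?thesis using S S2 T1 n unfolding v_def T_def d_def by (simp add: of_nat_diff)
qed


theorem mainTheorem13:
  fixes \<Phi> :: "nat \<Rightarrow> 'a::{alg_closed_field, field_char_0} mpoly"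
    and P :: "'a mpoly" and n k :: nat
  assumes "n \<ge> 1"
    and "poly_automorphism n \<Phi>"
    and "in_vars n P"
    and "((mpderiv (n - 1)) ^^ k) P \<noteq> 0"
  shows "int (tdeg (msubst \<Phi> P)) \<ge>
           int (tdeg (msubst \<Phi> (((mpderiv (n - 1)) ^^ k) P)))
           + int k * int (tdeg (\<Phi> (n - 1)))
           - int k * ((\<Sum>i<n. int (tdeg (\<Phi> i))) - int n)"
proof -
  obtain N where n: "n = Suc N" using assms(1) by (cases n) auto
  then have N: "n - 1 = N" by simp
  obtain \<Psi> where PhiV: "\<forall>i<n. in_vars n (\<Phi> i)" and PsiV: "\<forall>i<n. in_vars n (\<Psi> i)"
    and PsiPhi: "\<forall>i<n. msubst \<Psi> (\<Phi> i) = mvar i" and PhiPsi: "\<forall>i<n. msubst \<Phi> (\<Psi> i) = mvar i"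
    using assms(2) unfolding poly_automorphism_def by blast
  define D where "D = int (tdeg (\<Phi> N))"
  define Nb where "Nb = (\<Sum>i<n. int (tdeg (\<Phi> i))) - int n"
  have V: "in_vars n (((mpderiv N) ^^ k) P)" for k
    by (induction k) (auto simp: assms(3) in_vars_mpderiv)
  have "((mpderiv N) ^^ k) P \<noteq> 0 \<longrightarrow> int (tdeg (msubst \<Phi> P)) \<ge>
           int (tdeg (msubst \<Phi> (((mpderiv N) ^^ k) P))) + int k * D - int k * Nb" for k
  proof (induction k)
    case 0 then show ?case by simp
  next
    case (Suc k)
    show ?case
    proof
      assume nz: "(mpderiv N ^^ Suc k) P \<noteq> 0"
      then have nz': "(mpderiv N ^^ k) P \<noteq> 0" by auto
      have st: "int (tdeg (msubst \<Phi> ((mpderiv N ^^ k) P))) \<ge>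
          int (tdeg (msubst \<Phi> (mpderiv N ((mpderiv N ^^ k) P)))) + D - Nb"
        unfolding D_def Nb_def
        by (rule step_lemma[OF n PhiV PsiV PsiPhi PhiPsi V]) (use nz in simp)
      show "int (tdeg (msubst \<Phi> P)) \<ge>
           int (tdeg (msubst \<Phi> ((mpderiv N ^^ Suc k) P))) + int (Suc k) * D - int (Suc k) * Nb"
        using Suc.IH nz' st by (simp add: algebra_simps)
    qed
  qed
  then show ?thesis using assms(4) unfolding N D_def Nb_def by blast
qed

end
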